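(* Let $n$ be a positive integer and $r$ a positive divisor of $n$. For every $\chi:\mathbb Z_r\to\{1,-1\}$, \[\operatorname{disc}(\mathcal A_n)\le \max_{A\in\mathcal A_r}|\chi(A)|+\frac{n}{r}\cdot\max_{A_0\in\mathcal A_r^0}|\chi(A_0)|.\]
   Context: For a positive integer $N$, an arithmetic progression in $\mathbb{Z}_N$ is a set $\{a+kd: 0\le k<l\}$ with $a,d\in\mathbb{Z}_N$ and $l$ an integer with $0\le l\le N/\gcd(N,d)$ (with $\gcd(0,N)=N$); $\mathcal A_N$ is the family of all of them. For $s,i\in\mathbb{Z}_N$, $C(s,i)=\{x\in\mathbb{Z}_N: x=i+ks \text{ for some } k\in\mathbb{Z}_N\}$ (the congruence class of $i$ modulo $s$), and $\mathcal A_N^0=\{C(s,i): s,i\in\mathbb{Z}_N\}$. For $\chi$ and a set $B$, $\chi(B)=\sum_{x\in B}\chi(x)$, and $\operatorname{disc}(\mathcal A_N)=\min_{\chi:\mathbb{Z}_N\to\{1,-1\}}\max_{A\in\mathcal A_N}|\chi(A)|$. *)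

theory Defs
  imports Complex_Main
begin

text \<open>Z_N is modelled as the carrier {0..<N} of naturals with arithmetic mod N.\<close>

definition APs :: "nat \<Rightarrow> nat set set" where
  "APs N = {{(a + k * d) mod N | k. k < l} | a d l.
              a < N \<and> d < N \<and> l \<le> N div gcd N d}"

definition cclass :: "nat \<Rightarrow> nat \<Rightarrow> nat \<Rightarrow> nat set" where
  "cclass N s i = {(i + k * s) mod N | k. k < N}"

definition APs0 :: "nat \<Rightarrow> nat set set" where
  "APs0 N = {cclass N s i | s i. s < N \<and> i < N}"

definition colouring :: "nat \<Rightarrow> (nat \<Rightarrow> int) \<Rightarrow> bool" where
  "colouring N \<chi> \<longleftrightarrow> (\<forall>x<N. \<chi> x = 1 \<or> \<chi> x = -1)"

definition maxdev :: "(nat \<Rightarrow> int) \<Rightarrow> nat set set \<Rightarrow> int" where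
  "maxdev \<chi> F = Max ((\<lambda>A. \<bar>sum \<chi> A\<bar>) ` F)"

definition disc :: "nat \<Rightarrow> int" where
  "disc N = Min {maxdev \<chi> (APs N) | \<chi>. colouring N \<chi>}"

end

theory Submission
  imports Defs
begin

lemma set_img: "{(a + k * d) mod N | k. k < l} = (\<lambda>k. (a+k*d) mod N) ` {..<l}"
  by auto

lemma inj_ap:
  assumes "0 < N" "l \<le> N div gcd N d"
  shows "inj_on (\<lambda>k. (a+k*d) mod (N::nat)) {..<l}"
proof -
  have key: "k1 = k2" if "k1 \<le> k2" "k2 < l" "(a+k1*d) mod N = (a+k2*d) mod N" for k1 k2
  proof -
    have le: "a+k1*d \<le> a+k2*d" using mult_le_mono1[OF that(1), of d] by linarith
    have "N dvd (a+k2*d) - (a+k1*d)"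
      using mod_eq_dvd_iff_nat[OF le, of N] that(3) by metis
    hence h: "N dvd (k2-k1)*d" by (simp add: diff_mult_distrib)
    define g where "g = gcd N d"
    have gp: "g > 0" using assms g_def by simp
    obtain N' where N': "N = g*N'" using gcd_dvd1[of N d] unfolding g_def dvd_def by blast
    obtain d' where d': "d = g*d'" using gcd_dvd2[of N d] unfolding g_def dvd_def by blast
    have "gcd N d = g * gcd N' d'" by (simp only: N' d' gcd_mult_distrib_nat)
    hence "g * gcd N' d' = g" unfolding g_def[symmetric] by auto
    hence "gcd N' d' = 1" using gp by simp
    hence cop: "coprime N' d'" by (simp add: coprime_iff_gcd_eq_1)
    have E: "(k2-k1)*d = g*((k2-k1)*d')" unfolding d' by (rule mult.left_commute)
    have "g*N' dvd g*((k2-k1)*d')" using h by (simp only: N' E)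
    hence "N' dvd (k2-k1)*d'" using gp by simp
    hence "N' dvd (k2-k1)" using cop by (simp add: coprime_dvd_mult_left_iff)
    moreover have "N div g = N'" using N' gp by simp
    hence "k2 - k1 < N'" using that assms(2) unfolding g_def by linarith
    ultimately have "k2 - k1 = 0" by (metis dvd_imp_le leD neq0_conv)
    thus ?thesis using that by simp
  qed
  show ?thesis unfolding inj_on_def
  proof (intro ballI impI)
    fix x y assume xy: "x \<in> {..<l}" "y \<in> {..<l}" "(a + x * d) mod N = (a + y * d) mod N"
    show "x = y"
    proof (cases "x \<le> y")
      case True thus ?thesis using key[of x y] xy by simp
    next
      case False thus ?thesis using key[of y x] xy by simp
    qed
  qed
qed

lemma APs_sub: "0 < N \<Longrightarrow> A \<in> APs N \<Longrightarrow> A \<subseteq> {..<N}"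
  unfolding APs_def by auto

lemma APs0_sub: "0 < N \<Longrightarrow> A \<in> APs0 N \<Longrightarrow> A \<subseteq> {..<N}"
  unfolding APs0_def cclass_def by auto

lemma finite_APs: "0 < N \<Longrightarrow> finite (APs N)"
  by (rule finite_subset[of _ "Pow {..<N}"]) (auto dest: APs_sub)

lemma finite_APs0: "0 < N \<Longrightarrow> finite (APs0 N)"
  by (rule finite_subset[of _ "Pow {..<N}"]) (auto dest: APs0_sub)

lemma maxdev_ge: "finite F \<Longrightarrow> A \<in> F \<Longrightarrow> \<bar>sum \<chi> A\<bar> \<le> maxdev \<chi> F"
  unfolding maxdev_def by (rule Max_ge) auto

lemma gcd_modr: "gcd r (d mod r) = gcd r (d::nat)"
  by (metis gcd.commute gcd_red_nat)

lemma modred: "(a mod r + k * (d mod r)) mod r = (a+k*d) mod (r::nat)"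
proof -
  have "(a mod r + k * (d mod r)) mod r = (a + k * (d mod r)) mod r" by (rule mod_add_left_eq)
  also have "\<dots> = (a + (k * (d mod r)) mod r) mod r" by (rule mod_add_right_eq[symmetric])
  also have "(k * (d mod r)) mod r = (k*d) mod r" by (rule mod_mult_right_eq)
  also have "(a + (k*d) mod r) mod r = (a + k*d) mod r" by (rule mod_add_right_eq)
  finally show ?thesis .
qed

lemma ap_mem:
  assumes "0 < r" "l \<le> r div gcd r d"
  shows "(\<lambda>k. (a+k*d) mod r) ` {..<l} \<in> APs r"
proof -
  have "(\<lambda>k. (a+k*d) mod r) ` {..<l} = {(a mod r + k * (d mod r)) mod r | k. k < l}"
  proof -
    have "(a mod r + k * (d mod r)) mod r = (a+k*d) mod r" for k
    proof -
      have "(a mod r + k * (d mod r)) mod r = (a + k * (d mod r)) mod r" by (rule mod_add_left_eq)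
      also have "\<dots> = (a + (k * (d mod r)) mod r) mod r" by (rule mod_add_right_eq[symmetric])
      also have "(k * (d mod r)) mod r = (k*d) mod r" by (rule mod_mult_right_eq)
      also have "(a + (k*d) mod r) mod r = (a + k*d) mod r" by (rule mod_add_right_eq)
      finally show ?thesis .
    qed
    thus ?thesis by auto
  qed
  moreover have "a mod r < r" "d mod r < r" "l \<le> r div gcd r (d mod r)"
    using assms gcd_modr[of r d] by auto
  ultimately have "\<exists>a' d' l'. (\<lambda>k. (a+k*d) mod r) ` {..<l} = {(a' + k * d') mod r | k. k < l'} \<and> a' < r \<and> d' < r \<and> l' \<le> r div gcd r d'"
    by (intro exI[of _ "a mod r"] exI[of _ "d mod r"] exI[of _ l] conjI)
  thus ?thesis unfolding APs_def by (simp only: mem_Collect_eq)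
qed

lemma cc_mem:
  assumes "0 < r"
  shows "(\<lambda>k. (a+k*d) mod r) ` {..<r div gcd r d} \<in> APs0 r"
proof -
  define p where "p = r div gcd r d"
  have pp: "p > 0" using assms p_def
    by (simp add: div_greater_zero_iff gcd_le1_nat)
  have pr: "p \<le> r" using p_def by simp
  have pd: "p*d = r * (d div gcd r d)" using p_def
    by (metis dvd_div_mult dvd_div_mult_self gcd_dvd1 gcd_dvd2 mult.commute)
  have eq: "(a + k*d) mod r = (a + (k mod p)*d) mod r" for k
  proof -
    have "k*d = (k div p * p + k mod p)*d" by simp
    also have "\<dots> = k div p * (p*d) + k mod p * d" by (simp only: distrib_right mult.assoc)
    also have "\<dots> = r * (k div p * (d div gcd r d)) + k mod p * d" by (simp only: pd mult.left_commute)
    finally have "a + k*d = (a + (k mod p)*d) + ((k div p) * (d div gcd r d)) * r"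
      by (simp only: add.assoc mult.commute)
    thus ?thesis by (simp only: mod_mult_self1)
  qed
  have "(\<lambda>k. (a+k*d) mod r) ` {..<p} = {(a mod r + k * (d mod r)) mod r | k. k < r}"
  proof (rule set_eqI, rule iffI)
    fix x assume "x \<in> (\<lambda>k. (a+k*d) mod r) ` {..<p}"
    then obtain k where "k < p" "x = (a+k*d) mod r" by auto
    thus "x \<in> {(a mod r + k * (d mod r)) mod r | k. k < r}" using pr modred[of a r k d]
      by (intro CollectI exI[of _ k]) auto
  next
    fix x assume "x \<in> {(a mod r + k * (d mod r)) mod r | k. k < r}"
    then obtain k where "x = (a + k*d) mod r" using modred by auto
    hence "x = (a + (k mod p)*d) mod r" using eq by simp
    moreover have "k mod p < p" using pp by simp
    ultimately show "x \<in> (\<lambda>k. (a+k*d) mod r) ` {..<p}" by auto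
  qed
  moreover have "a mod r < r" "d mod r < r" using assms by auto
  ultimately have "\<exists>s i. (\<lambda>k. (a+k*d) mod r) ` {..<p} = {(i + k * s) mod r | k. k < r} \<and> s < r \<and> i < r"
    by (intro exI[of _ "d mod r"] exI[of _ "a mod r"] conjI)
  thus ?thesis unfolding APs0_def cclass_def p_def[symmetric] by (simp only: mem_Collect_eq)
qed

lemma sum_split: "(\<Sum>k<m+(n::nat). f k) = (\<Sum>k<m. f k) + (\<Sum>k<n. f (m+k)::int)"
proof (induct n)
  case 0 then show ?case by simp
next
  case (Suc n) then show ?case by (simp add: ac_simps)
qed

lemma block_bound:
  fixes g :: "nat \<Rightarrow> int"
  assumes "0 < p" "\<forall>a l. l \<le> p \<longrightarrow> \<bar>\<Sum>k<l. g (a+k*d)\<bar> \<le> M"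
    "\<forall>a. \<bar>\<Sum>k<p. g (a+k*d)\<bar> \<le> M0"
  shows "\<bar>\<Sum>k<l. g (a+k*d)\<bar> \<le> M + int (l div p) * M0"
proof (induction l arbitrary: a rule: less_induct)
  case (less l)
  show ?case
  proof (cases "l < p")
    case True then show ?thesis using assms(2) by simp
  next
    case False
    hence l: "l = p + (l - p)" by simp
    have "(\<Sum>k<l. g (a+k*d)) = (\<Sum>k<p. g (a+k*d)) + (\<Sum>k<l-p. g (a+(p+k)*d))"
      by (subst l, rule sum_split)
    also have "(\<Sum>k<l-p. g (a+(p+k)*d)) = (\<Sum>k<l-p. g ((a+p*d)+k*d))"
      by (simp add: algebra_simps)
    finally have e: "(\<Sum>k<l. g (a+k*d)) = (\<Sum>k<p. g (a+k*d)) + (\<Sum>k<l-p. g ((a+p*d)+k*d))" .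
    have ih: "\<bar>\<Sum>k<l-p. g ((a+p*d)+k*d)\<bar> \<le> M + int ((l-p) div p) * M0"
      using less.IH[of "l-p" "a+p*d"] assms(1) False by simp
    have dv: "l div p = Suc ((l-p) div p)" using False assms(1) by (simp add: le_div_geq)
    show ?thesis using e ih assms(3)[rule_format, of a] dv by (simp add: algebra_simps)
  qed
qed

theorem lemma3p2:
  fixes n r :: nat and \<chi> :: "nat \<Rightarrow> int"
  assumes "0 < n" and "0 < r" and "r dvd n" and "colouring r \<chi>"
  shows "real_of_int (disc n) \<le>
           real_of_int (maxdev \<chi> (APs r)) + real n / real r * real_of_int (maxdev \<chi> (APs0 r))"
proof -
  define M where "M = maxdev \<chi> (APs r)"
  define M0 where "M0 = maxdev \<chi> (APs0 r)"
  define \<psi> where "\<psi> = (\<lambda>x. \<chi> (x mod r))"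
  have col: "colouring n \<psi>" using assms(2,4) unfolding colouring_def \<psi>_def by simp
  have M0nn: "M0 \<ge> 0"
    using maxdev_ge[OF finite_APs0[OF assms(2)] cc_mem[OF assms(2), of 0 0], of \<chi>] M0_def
    by simp
  have bnd: "\<bar>sum \<psi> A\<bar> \<le> M + int (n div r) * M0" if A: "A \<in> APs n" for A
  proof -
    obtain a d l where A': "A = {(a + k * d) mod n | k. k < l}" and adl: "l \<le> n div gcd n d"
      using A unfolding APs_def by auto
    define p where "p = r div gcd r d"
    have pp: "p > 0" using assms p_def
      by (simp add: div_greater_zero_iff gcd_le1_nat)
    have "sum \<psi> A = (\<Sum>k<l. \<psi> ((a+k*d) mod n))"
      unfolding A' set_img by (rule sum.reindex_cong[OF inj_ap[OF assms(1) adl]]) auto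
    also have "\<dots> = (\<Sum>k<l. (\<lambda>x. \<chi> (x mod r)) (a+k*d))"
      unfolding \<psi>_def using assms(3) by (simp add: mod_mod_cancel)
    finally have sA: "sum \<psi> A = (\<Sum>k<l. (\<lambda>x. \<chi> (x mod r)) (a+k*d))" .
    have hM: "\<forall>a l. l \<le> p \<longrightarrow> \<bar>\<Sum>k<l. (\<lambda>x. \<chi> (x mod r)) (a+k*d)\<bar> \<le> M"
    proof (intro allI impI)
      fix a' l' assume "l' \<le> p"
      hence l': "l' \<le> r div gcd r d" using p_def by simp
      have "sum \<chi> ((\<lambda>k. (a'+k*d) mod r) ` {..<l'}) = (\<Sum>k<l'. (\<lambda>x. \<chi> (x mod r)) (a'+k*d))"
        by (rule sum.reindex_cong[OF inj_ap[OF assms(2) l']]) auto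
      thus "\<bar>\<Sum>k<l'. (\<lambda>x. \<chi> (x mod r)) (a'+k*d)\<bar> \<le> M"
        using maxdev_ge[OF finite_APs[OF assms(2)] ap_mem[OF assms(2) l'], of \<chi>] M_def by metis
    qed
    have hM0: "\<forall>a. \<bar>\<Sum>k<p. (\<lambda>x. \<chi> (x mod r)) (a+k*d)\<bar> \<le> M0"
    proof
      fix a'
      have l': "p \<le> r div gcd r d" using p_def by simp
      have "sum \<chi> ((\<lambda>k. (a'+k*d) mod r) ` {..<p}) = (\<Sum>k<p. (\<lambda>x. \<chi> (x mod r)) (a'+k*d))"
        by (rule sum.reindex_cong[OF inj_ap[OF assms(2) l']]) auto
      thus "\<bar>\<Sum>k<p. (\<lambda>x. \<chi> (x mod r)) (a'+k*d)\<bar> \<le> M0"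
        using maxdev_ge[OF finite_APs0[OF assms(2)] cc_mem[OF assms(2)], of \<chi> a' d] M0_def p_def by metis
    qed
    have b1: "\<bar>sum \<psi> A\<bar> \<le> M + int (l div p) * M0"
      using block_bound[OF pp hM hM0] sA by simp
    have qle: "l div p \<le> n div r"
    proof -
      define g' where "g' = gcd r d"
      define g where "g = gcd n d"
      have g'p: "g' > 0" using assms(2) g'_def by simp
      have g'g: "g' dvd g" using g'_def g_def assms(3)
        by (meson dvd_trans gcd_dvd1 gcd_dvd2 gcd_greatest)
      have gp: "g > 0" using assms(1) g_def by simp
      have "g' \<le> g" using g'g gp by (simp add: dvd_imp_le)
      hence "n div g \<le> n div g'" using g'p by (simp add: div_le_mono2)
      moreover have "(l div p) * p \<le> l" by (metis div_mult_mod_eq le_add1)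
      ultimately have "(l div p) * p \<le> n div g'" using adl unfolding g_def
        by linarith
      hence a1: "(l div p) * p * g' \<le> (n div g') * g'" by simp
      have a2: "(n div g') * g' = n" using g'_def assms(3)
        by (meson dvd_div_mult_self dvd_trans gcd_dvd1)
      have pg: "p * g' = r" using p_def g'_def by simp
      have "(l div p) * r \<le> n" using a1 a2 pg by (metis mult.assoc)
      thus ?thesis using assms(2)
        by (metis div_le_mono nonzero_mult_div_cancel_right not_gr_zero)
    qed
    have "int (l div p) * M0 \<le> int (n div r) * M0"
      using qle M0nn by (simp add: mult_right_mono)
    thus ?thesis using b1 by simp
  qed
  have emp: "{} \<in> APs n" unfolding APs_def
    by (intro CollectI exI[of _ 0] exI[of _ 0] exI[of _ 0]) (auto simp: assms)
  have md: "maxdev \<psi> (APs n) \<le> M + int (n div r) * M0"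
    unfolding maxdev_def using bnd finite_APs[OF assms(1)] emp
    by (subst Max_le_iff) auto
  have fin: "finite {maxdev \<phi> (APs n) | \<phi>. colouring n \<phi>}"
  proof (rule finite_subset[of _ "{0..int n}"])
    show "{maxdev \<phi> (APs n) | \<phi>. colouring n \<phi>} \<subseteq> {0..int n}"
    proof
      fix v assume "v \<in> {maxdev \<phi> (APs n) | \<phi>. colouring n \<phi>}"
      then obtain \<phi> where v: "v = maxdev \<phi> (APs n)" and c: "colouring n \<phi>" by auto
      have "\<bar>sum \<phi> A\<bar> \<le> int n" if "A \<in> APs n" for A
      proof -
        have sub: "A \<subseteq> {..<n}" using APs_sub[OF assms(1) that] .
        have "\<bar>sum \<phi> A\<bar> \<le> sum (\<lambda>x. \<bar>\<phi> x\<bar>) A" by (rule sum_abs)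
        also have "\<dots> = sum (\<lambda>x. 1) A"
          using sub c unfolding colouring_def by (intro sum.cong) auto
        also have "\<dots> = int (card A)" by simp
        also have "\<dots> \<le> int n" using card_mono[OF _ sub] by simp
        finally show ?thesis .
      qed
      hence "v \<le> int n" unfolding v maxdev_def using finite_APs[OF assms(1)] emp
        by (subst Max_le_iff) auto
      moreover have "0 \<le> v" using maxdev_ge[OF finite_APs[OF assms(1)] emp, of \<phi>] v by simp
      ultimately show "v \<in> {0..int n}" by simp
    qed
  qed simp
  have "disc n \<le> maxdev \<psi> (APs n)" unfolding disc_def
    using col by (intro Min_le[OF fin]) auto
  hence "disc n \<le> M + int (n div r) * M0" using md by simp
  hence "real_of_int (disc n) \<le> real_of_int M + real (n div r) * real_of_int M0"
    by (metis of_int_add of_int_le_iff of_int_mult of_int_of_nat_eq)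
  moreover have "real (n div r) = real n / real r" using assms(3) by (simp add: real_of_nat_div)
  ultimately show ?thesis using M_def M0_def by simp
qed

end
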